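(* Let $(X,\rho)$ be a metric space, $A,B$ nonempty subsets of $X$, and let $F:A\times A\to B$, $G:B\times B\to A$ be such that there exist $\alpha,\beta\ge0$ with $\alpha+\beta<1$ and $$\rho(F(x,x'),G(y,y'))\le\alpha\rho(x,y)+\beta\rho(x',y')+(1-(\alpha+\beta))\,\mathrm{dist}(A,B)$$ for all $x,x'\in A$ and $y,y'\in B$. For $(x_0,y_0)\in A\times A$ define recursively, for $n\ge0$, $$x_{2n+1}=F(x_{2n},y_{2n}),\ y_{2n+1}=F(y_{2n},x_{2n}),\qquad x_{2n+2}=G(x_{2n+1},y_{2n+1}),\ y_{2n+2}=G(y_{2n+1},x_{2n+1}).$$ Then the sequences $\{x_n\}_{n=0}^\infty$ and $\{y_n\}_{n=0}^\infty$ are bounded.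
   Context: $\mathrm{dist}(A,B)=\inf\{\rho(a,b):a\in A,\ b\in B\}$. *)

theory Defs
  imports "HOL-Analysis.Analysis"
begin

definition set_dist :: "'a::metric_space set \<Rightarrow> 'a set \<Rightarrow> real" where
  "set_dist A B = Inf {dist a b | a b. a \<in> A \<and> b \<in> B}"

text \<open>The coupled iteration: the pair (x_n, y_n). Odd steps use F, even steps (n \<ge> 2) use G.\<close>
fun cpl_seq :: "('a \<Rightarrow> 'a \<Rightarrow> 'a) \<Rightarrow> ('a \<Rightarrow> 'a \<Rightarrow> 'a) \<Rightarrow> 'a \<Rightarrow> 'a \<Rightarrow> nat \<Rightarrow> 'a \<times> 'a" where
  "cpl_seq F G x0 y0 0 = (x0, y0)"
| "cpl_seq F G x0 y0 (Suc n) =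
     (let (x, y) = cpl_seq F G x0 y0 n in
      if even n then (F x y, F y x) else (G x y, G y x))"

end

theory Submission
  imports Defs
begin

theorem lemma34:
  fixes A B :: "'a::metric_space set"
    and F G :: "'a \<Rightarrow> 'a \<Rightarrow> 'a"
    and \<alpha> \<beta> :: real
    and x0 y0 :: 'a
  assumes "A \<noteq> {}" and "B \<noteq> {}"
    and F_maps: "\<And>x x'. x \<in> A \<Longrightarrow> x' \<in> A \<Longrightarrow> F x x' \<in> B"
    and G_maps: "\<And>y y'. y \<in> B \<Longrightarrow> y' \<in> B \<Longrightarrow> G y y' \<in> A"
    and "\<alpha> \<ge> 0" and "\<beta> \<ge> 0" and "\<alpha> + \<beta> < 1"
    and contr: "\<And>x x' y y'. x \<in> A \<Longrightarrow> x' \<in> A \<Longrightarrow> y \<in> B \<Longrightarrow> y' \<in> B \<Longrightarrow>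
        dist (F x x') (G y y') \<le> \<alpha> * dist x y + \<beta> * dist x' y' + (1 - (\<alpha> + \<beta>)) * set_dist A B"
    and "x0 \<in> A" and "y0 \<in> A"
  shows "bounded (range (\<lambda>n. fst (cpl_seq F G x0 y0 n)))
       \<and> bounded (range (\<lambda>n. snd (cpl_seq F G x0 y0 n)))"
proof -
  define x where "x n = fst (cpl_seq F G x0 y0 n)" for n
  define y where "y n = snd (cpl_seq F G x0 y0 n)" for n
  define k where "k = \<alpha> + \<beta>"
  define c where "c = 2 * (1 - k) * set_dist A B"
  define E where "E i j = dist (x i) (x j) + dist (y i) (y j)" for i j
  have x0: "x 0 = x0" "y 0 = y0" by (simp_all add: x_def y_def)
  have stepE: "even n \<Longrightarrow> x (Suc n) = F (x n) (y n) \<and> y (Suc n) = F (y n) (x n)" for n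
    by (simp add: x_def y_def split_beta)
  have stepO: "odd n \<Longrightarrow> x (Suc n) = G (x n) (y n) \<and> y (Suc n) = G (y n) (x n)" for n
    by (simp add: x_def y_def split_beta)
  have mem: "(even n \<longrightarrow> x n \<in> A \<and> y n \<in> A) \<and> (odd n \<longrightarrow> x n \<in> B \<and> y n \<in> B)" for n
  proof (induction n)
    case 0 then show ?case using x0 assms by simp
  next
    case (Suc n) then show ?case
      using stepE[of n] stepO[of n] F_maps G_maps by (cases "even n") auto
  qed
  have Esym: "E i j = E j i" for i j by (simp add: E_def dist_commute)
  have Etri: "E i j \<le> E i l + E l j" for i j l
    using dist_triangle[of "x i" "x j" "x l"] dist_triangle[of "y i" "y j" "y l"]
    by (simp add: E_def)
  have Enn: "E i j \<ge> 0" for i j by (simp add: E_def)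
  have key0: "even i \<Longrightarrow> odd j \<Longrightarrow> E (Suc i) (Suc j) \<le> k * E i j + c" for i j
  proof -
    assume ij: "even i" "odd j"
    have m: "x i \<in> A" "y i \<in> A" "x j \<in> B" "y j \<in> B" using mem[of i] mem[of j] ij by auto
    have "dist (x (Suc i)) (x (Suc j)) \<le> \<alpha> * dist (x i) (x j) + \<beta> * dist (y i) (y j) + (1 - (\<alpha> + \<beta>)) * set_dist A B"
      using stepE[OF ij(1)] stepO[OF ij(2)] contr[OF m] by simp
    moreover have "dist (y (Suc i)) (y (Suc j)) \<le> \<alpha> * dist (y i) (y j) + \<beta> * dist (x i) (x j) + (1 - (\<alpha> + \<beta>)) * set_dist A B"
      using stepE[OF ij(1)] stepO[OF ij(2)] contr[OF m(2,1,4,3)] by simp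
    ultimately show ?thesis by (simp add: E_def k_def c_def algebra_simps)
  qed
  have key: "even i \<noteq> even j \<Longrightarrow> E (Suc i) (Suc j) \<le> k * E i j + c" for i j
    using key0[of i j] key0[of j i] Esym by (cases "even i") auto
  have k01: "0 \<le> k" "k < 1" using assms by (auto simp: k_def)
  define M where "M = max (E 0 1) (2 * set_dist A B)"
  have S: "E n (Suc n) \<le> M" for n
  proof (induction n)
    case 0 then show ?case by (simp add: M_def)
  next
    case (Suc n)
    have "E (Suc n) (Suc (Suc n)) \<le> k * E n (Suc n) + c" using key[of n "Suc n"] by simp
    also have "\<dots> \<le> M"
    proof -
      have "k * E n (Suc n) \<le> k * M" using Suc k01 by (simp add: mult_left_mono)
      moreover have "(1 - k) * (2 * set_dist A B) \<le> (1 - k) * M" using k01 by (intro mult_left_mono) (auto simp: M_def)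
      ultimately show ?thesis using k01 by (simp add: c_def algebra_simps)
    qed
    finally show ?case .
  qed
  have M0: "M \<ge> 0" using Enn[of 0 1] by (simp add: M_def)
  define C where "C = (2 * M + c) / (1 - k)"
  have odd_b: "odd m \<Longrightarrow> E m 0 \<le> C" for m
  proof -
    assume om: "odd m"
    have "E m 0 \<le> E m (Suc m) + E (Suc m) 0" by (rule Etri)
    also have "E (Suc m) 0 \<le> E (Suc m) 1 + E 1 0" by (rule Etri)
    finally have "E m 0 \<le> E m (Suc m) + E (Suc m) (Suc 0) + E 1 0" by simp
    moreover have "E (Suc m) (Suc 0) \<le> k * E m 0 + c" using key[of m 0] om by simp
    moreover have "E 1 0 \<le> M" using S[of 0] Esym by simp
    ultimately have "(1 - k) * E m 0 \<le> 2 * M + c" using S[of m] by (simp add: algebra_simps)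
    then show ?thesis using k01 by (simp add: C_def pos_le_divide_eq mult.commute)
  qed
  have C0: "C \<ge> 0" using odd_b[of 1] Enn[of 1 0] by simp
  have allb: "E n 0 \<le> M + C" for n
  proof (cases n)
    case 0 then show ?thesis using M0 C0 by (simp add: E_def)
  next
    case (Suc m)
    show ?thesis
    proof (cases "odd n")
      case True then show ?thesis using odd_b M0 by force
    next
      case False
      then have "odd m" using Suc by simp
      have "E n 0 \<le> E n m + E m 0" by (rule Etri)
      moreover have "E n m \<le> M" using S[of m] Esym Suc by simp
      ultimately show ?thesis using odd_b[OF \<open>odd m\<close>] by simp
    qed
  qed
  have bx: "dist x0 (x n) \<le> M + C" for n
    using allb[of n] x0 dist_commute[of x0 "x n"] by (simp add: E_def) (smt (verit) zero_le_dist)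
  have by': "dist y0 (y n) \<le> M + C" for n
    using allb[of n] x0 dist_commute[of y0 "y n"] by (simp add: E_def) (smt (verit) zero_le_dist)
  show ?thesis unfolding bounded_def
    using bx by' by (auto simp: x_def y_def)
qed

end
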